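(* Let $A\in\mathbb{C}^{n\times n}$, and fix $A^-\in A\{1\}$ and $A^{GD}\in A\{GD\}$. For $X\in\mathbb{C}^{n\times n}$ the following are equivalent: (i) $X = A^{-}AA^{GD}$; (ii) $AX = AA^{GD}$ and $R(X)=R(A^{-}A)$; (iii) $A^{GD}AX = A^{GD}AA^{GD}$ and $R(X)=R(A^{-}A)$.
   Context: For $A\in\mathbb{C}^{n\times n}$, $ind(A)$ is the smallest nonnegative integer $k$ with $\mathrm{rank}(A^k)=\mathrm{rank}(A^{k+1})$. $A\{1\}$ is the set of matrices $X$ with $AXA=A$. With $k=ind(A)$, $A\{GD\}$ is the set of G-Drazin inverses of $A$: matrices $X$ with $AXA=A$, $XA^{k+1}=A^k$, $A^{k+1}X=A^k$. $R(\cdot)$ denotes range. The matrix $A^-AA^{GD}$ is called the 1GD inverse of $A$ associated with $A^-$ and $A^{GD}$. *)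

theory Defs
  imports "HOL-Analysis.Analysis"
begin

primrec matpow :: "'a::semiring_1^'n^'n \<Rightarrow> nat \<Rightarrow> 'a^'n^'n" where
  "matpow A 0 = mat 1"
| "matpow A (Suc k) = A ** matpow A k"

definition ind :: "'a::field^'n^'n \<Rightarrow> nat" where
  "ind A = (LEAST k. rank (matpow A k) = rank (matpow A (Suc k)))"

definition inner_inverses :: "'a::field^'n^'n \<Rightarrow> ('a^'n^'n) set" where
  "inner_inverses A = {X. A ** X ** A = A}"

definition gdrazin_inverses :: "'a::field^'n^'n \<Rightarrow> ('a^'n^'n) set" where
  "gdrazin_inverses A = {X. A ** X ** A = A
      \<and> X ** matpow A (Suc (ind A)) = matpow A (ind A)
      \<and> matpow A (Suc (ind A)) ** X = matpow A (ind A)}"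

definition mrange :: "'a::semiring_1^'n^'m \<Rightarrow> ('a^'m) set" where
  "mrange X = range (\<lambda>v. X *v v)"

end

theory Submission
  imports Defs
begin

lemma range_proj:
  fixes A Am X :: "complex^'n^'n"
  assumes AmA: "A ** Am ** A = A"
    and R: "mrange X \<subseteq> mrange (Am ** A)"
  shows "Am ** A ** X = X"
proof -
  have "(Am ** A ** X) *v v = X *v v" for v
  proof -
    have "X *v v \<in> mrange (Am ** A)" using R unfolding mrange_def by auto
    then obtain w where w: "X *v v = (Am ** A) *v w" unfolding mrange_def by auto
    have "(Am ** A ** X) *v v = (Am ** A) *v (X *v v)"
      by (simp add: matrix_vector_mul_assoc)
    also have "\<dots> = (Am ** (A ** Am ** A)) *v w"
      by (simp add: w matrix_vector_mul_assoc matrix_mul_assoc)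
    also have "\<dots> = X *v v" using AmA w by simp
    finally show ?thesis .
  qed
  then show ?thesis by (simp add: matrix_eq)
qed

lemma range_eq:
  fixes A Am G :: "complex^'n^'n"
  assumes AGA: "A ** G ** A = A"
  shows "mrange (Am ** A ** G) = mrange (Am ** A)"
proof
  show "mrange (Am ** A ** G) \<subseteq> mrange (Am ** A)"
    unfolding mrange_def by (auto simp: matrix_vector_mul_assoc[symmetric] matrix_mul_assoc)
  show "mrange (Am ** A) \<subseteq> mrange (Am ** A ** G)"
  proof
    fix y assume "y \<in> mrange (Am ** A)"
    then obtain v where v: "y = (Am ** A) *v v" unfolding mrange_def by auto
    have "Am ** A = Am ** (A ** G ** A)" using AGA by simp
    then have "Am ** A = Am ** A ** G ** A" by (simp add: matrix_mul_assoc)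
    then have "y = (Am ** A ** G) *v (A *v v)" using v by (metis matrix_vector_mul_assoc)
    then show "y \<in> mrange (Am ** A ** G)" unfolding mrange_def by auto
  qed
qed

theorem theorem3p5:
  fixes A Am Agd X :: "complex^'n^'n"
  assumes "Am \<in> inner_inverses A"
    and "Agd \<in> gdrazin_inverses A"
  shows "(X = Am ** A ** Agd
            \<longleftrightarrow> (A ** X = A ** Agd \<and> mrange X = mrange (Am ** A)))
       \<and> (X = Am ** A ** Agd
            \<longleftrightarrow> (Agd ** A ** X = Agd ** A ** Agd \<and> mrange X = mrange (Am ** A)))"
proof -
  have AmA: "A ** Am ** A = A" using assms(1) by (simp add: inner_inverses_def)
  have AGA: "A ** Agd ** A = A" using assms(2) by (simp add: gdrazin_inverses_def)
  have i2: "A ** X = A ** Agd \<and> mrange X = mrange (Am ** A)" if "X = Am ** A ** Agd"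
  proof
    have "A ** X = (A ** Am ** A) ** Agd" using that by (simp add: matrix_mul_assoc)
    then show "A ** X = A ** Agd" using AmA by simp
    show "mrange X = mrange (Am ** A)" using that range_eq[OF AGA] by simp
  qed
  have i1: "X = Am ** A ** Agd" if "A ** X = A ** Agd" "mrange X = mrange (Am ** A)"
  proof -
    have "X = Am ** A ** X" using range_proj[OF AmA] that(2) by simp
    also have "\<dots> = Am ** (A ** Agd)" using that(1) by (metis matrix_mul_assoc)
    finally show ?thesis by (simp add: matrix_mul_assoc)
  qed
  have e: "A ** X = A ** Agd \<longleftrightarrow> Agd ** A ** X = Agd ** A ** Agd"
  proof
    assume "A ** X = A ** Agd"
    then show "Agd ** A ** X = Agd ** A ** Agd" by (metis matrix_mul_assoc)
  next
    assume h: "Agd ** A ** X = Agd ** A ** Agd"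
    have "A ** X = (A ** Agd ** A) ** X" using AGA by simp
    also have "\<dots> = A ** (Agd ** A ** X)" by (simp add: matrix_mul_assoc)
    also have "\<dots> = A ** (Agd ** A ** Agd)" using h by simp
    also have "\<dots> = (A ** Agd ** A) ** Agd" by (simp add: matrix_mul_assoc)
    finally show "A ** X = A ** Agd" using AGA by simp
  qed
  show ?thesis using i1 i2 e by blast
qed

end
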